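(* Let $m\in\mathbb{N}$, $\alpha\in[0,1]$, and let $V$ be a 1-periodic complex-valued distribution with $V\in H_{+}^{-m\alpha}$. Let $S_{\pm}(V)=D_{\pm}^{2m}\dotplus V(x)$ be the form-sum operators on $L_2(0,1)$, i.e. the $m$-sectorial operators associated with the closed sectorial forms $t_\pm[u,v]=\langle D_{\pm}^{2m}u,v\rangle_{\pm}+\langle V(x)u,v\rangle_{\pm}$, $\mathrm{Dom}(t_\pm)=H_\pm^m$; equivalently $\mathrm{Dom}(S_{\pm})=\{u\in H_{\pm}^{m}\mid D_{\pm}^{2m}u+V(x)u\in L_{2}(0,1)\}$, $S_\pm(V)u=D_{\pm}^{2m}u+V(x)u$. Then $$\mathrm{Dom}(S_{\pm})\subseteq H_{\pm}^{m(2-\alpha)}.$$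
   Context: For $s\in\mathbb{R}$, $H_{+}^{s}$ is the space of formal series $f=\sum_{k\in\mathbb{Z}}\widehat f(2k)e^{i2k\pi x}$ with $\|f\|_{H_+^s}^2=\sum_k\langle 2k\rangle^{2s}|\widehat f(2k)|^2<\infty$, and $H_{-}^{s}$ is the space of formal series $f=\sum_{k}\widehat f(2k+1)e^{i(2k+1)\pi x}$ with $\|f\|_{H_-^s}^2=\sum_k\langle 2k+1\rangle^{2s}|\widehat f(2k+1)|^2<\infty$, where $\langle k\rangle=1+|k|$; $H_\pm^0=L_2(0,1)$. $\langle\cdot,\cdot\rangle_{\pm}$ is the pairing between $H_\pm^{s}$ and $H_\pm^{-s}$ extending the $L_2(0,1)$ inner product. $D_{\pm}=-i\,d/dx$ on $H_\pm^1$ and $D_\pm^{2m}=|D_\pm|^{2m}$ (multiplication by $(n\pi)^{2m}$ on the Fourier mode $e^{in\pi x}$), extended to all $H^s_\pm$. For $V\in H_+^{-m}$ and $u\in H_\pm^{m}$, $V(x)u=\sum_n\big(\sum_j\widehat V(n-j)\widehat u(j)\big)e^{in\pi x}\in H_\pm^{-m}$ is the formal product of Fourier series. Note $H_+^{-m\alpha}\subseteq H_+^{-m}$, so the operators are well defined. *)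

theory Defs
  imports "HOL-Analysis.Analysis"
begin

text \<open>Elements of H^s_+ / H^s_- are represented by their Fourier coefficient functions
  f :: int => complex, where f n is the coefficient of exp(i n pi x).
  The boolean pm selects the sign: True = plus (even frequencies), False = minus (odd).\<close>

definition jbr :: "int \<Rightarrow> real" where
  "jbr k = 1 + real_of_int \<bar>k\<bar>"

definition freqs :: "bool \<Rightarrow> int set" where
  "freqs pm = (if pm then {n. even n} else {n. odd n})"

definition Hsp :: "bool \<Rightarrow> real \<Rightarrow> (int \<Rightarrow> complex) set" where
  "Hsp pm s = {f. (\<forall>n. n \<notin> freqs pm \<longrightarrow> f n = 0) \<and>
      (\<lambda>n. jbr n powr (2 * s) * (cmod (f n))\<^sup>2) summable_on freqs pm}"

definition Dpow :: "nat \<Rightarrow> (int \<Rightarrow> complex) \<Rightarrow> (int \<Rightarrow> complex)" where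
  "Dpow m u = (\<lambda>n. complex_of_real ((real_of_int n * pi) ^ (2 * m)) * u n)"

definition fmult :: "(int \<Rightarrow> complex) \<Rightarrow> (int \<Rightarrow> complex) \<Rightarrow> (int \<Rightarrow> complex)" where
  "fmult V u = (\<lambda>n. \<Sum>\<^sub>\<infinity>j. V (n - j) * u j)"

definition DomS :: "bool \<Rightarrow> nat \<Rightarrow> (int \<Rightarrow> complex) \<Rightarrow> (int \<Rightarrow> complex) set" where
  "DomS pm m V = {u \<in> Hsp pm (real m). (\<lambda>n. Dpow m u n + fmult V u n) \<in> Hsp pm 0}"

end

theory Submission imports Defs "HOL-Analysis.Analysis" begin

lemma cs_infsum:
  fixes x y :: "'a \<Rightarrow> real"
  assumes x0: "\<And>j. x j \<ge> 0" and y0: "\<And>j. y j \<ge> 0"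
    and xs: "(\<lambda>j. (x j)\<^sup>2) summable_on A" and ys: "(\<lambda>j. (y j)\<^sup>2) summable_on A"
  shows "(\<lambda>j. x j * y j) summable_on A"
    and "(\<Sum>\<^sub>\<infinity>j\<in>A. x j * y j)\<^sup>2 \<le> (\<Sum>\<^sub>\<infinity>j\<in>A. (x j)\<^sup>2) * (\<Sum>\<^sub>\<infinity>j\<in>A. (y j)\<^sup>2)"
proof -
  have s2: "(\<lambda>j. ((x j)\<^sup>2 + (y j)\<^sup>2)/2) summable_on A"
    using summable_on_cmult_left[OF summable_on_add[OF xs ys], of "1/2"] by simp
  show sm: "(\<lambda>j. x j * y j) summable_on A"
  proof (rule summable_on_comparison_test[OF s2])
    fix j show "x j * y j \<le> ((x j)\<^sup>2 + (y j)\<^sup>2)/2"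
      using sum_squares_bound[of "x j" "y j"] by simp
    show "0 \<le> x j * y j" using x0 y0 by simp
  qed
  define X where "X = (\<Sum>\<^sub>\<infinity>j\<in>A. (x j)\<^sup>2)"
  define Y where "Y = (\<Sum>\<^sub>\<infinity>j\<in>A. (y j)\<^sup>2)"
  have X0: "X \<ge> 0" unfolding X_def by (simp add: infsum_nonneg)
  have Y0: "Y \<ge> 0" unfolding Y_def by (simp add: infsum_nonneg)
  have "(\<Sum>\<^sub>\<infinity>j\<in>A. x j * y j) \<le> sqrt (X * Y)"
  proof (rule infsum_le_finite_sums[OF sm])
    fix F assume F: "finite F" "F \<subseteq> A"
    have "(\<Sum>j\<in>F. x j * y j)\<^sup>2 \<le> (\<Sum>j\<in>F. (x j)\<^sup>2) * (\<Sum>j\<in>F. (y j)\<^sup>2)"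
      by (rule Cauchy_Schwarz_ineq_sum)
    also have "\<dots> \<le> X * Y"
    proof (rule mult_mono)
      show "(\<Sum>j\<in>F. (x j)\<^sup>2) \<le> X" unfolding X_def
        by (rule finite_sum_le_infsum[OF xs F]) simp
      show "(\<Sum>j\<in>F. (y j)\<^sup>2) \<le> Y" unfolding Y_def
        by (rule finite_sum_le_infsum[OF ys F]) simp
    qed (auto simp: X0 sum_nonneg)
    finally show "(\<Sum>j\<in>F. x j * y j) \<le> sqrt (X * Y)"
      by (rule real_le_rsqrt)
  qed
  moreover have "0 \<le> (\<Sum>\<^sub>\<infinity>j\<in>A. x j * y j)" using x0 y0 by (simp add: infsum_nonneg)
  ultimately have "(\<Sum>\<^sub>\<infinity>j\<in>A. x j * y j)\<^sup>2 \<le> (sqrt (X*Y))\<^sup>2"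
    by (simp add: power_mono)
  then show "(\<Sum>\<^sub>\<infinity>j\<in>A. x j * y j)\<^sup>2 \<le> (\<Sum>\<^sub>\<infinity>j\<in>A. (x j)\<^sup>2) * (\<Sum>\<^sub>\<infinity>j\<in>A. (y j)\<^sup>2)"
    using X0 Y0 by (simp add: X_def Y_def)
qed

lemma sum_infsum_swap:
  fixes F :: "'b \<Rightarrow> 'a \<Rightarrow> real"
  assumes "finite N" "\<And>n. n \<in> N \<Longrightarrow> F n summable_on A"
  shows "(\<lambda>j. \<Sum>n\<in>N. F n j) summable_on A \<and> (\<Sum>n\<in>N. infsum (F n) A) = (\<Sum>\<^sub>\<infinity>j\<in>A. \<Sum>n\<in>N. F n j)"
  using assms
proof (induction N rule: finite_induct)
  case empty then show ?case by simp
next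
  case (insert a N)
  then have ia: "F a summable_on A" and IH: "(\<lambda>j. \<Sum>n\<in>N. F n j) summable_on A"
      "(\<Sum>n\<in>N. infsum (F n) A) = (\<Sum>\<^sub>\<infinity>j\<in>A. \<Sum>n\<in>N. F n j)" by auto
  have e: "\<And>j. (\<Sum>n\<in>insert a N. F n j) = F a j + (\<Sum>n\<in>N. F n j)"
    using insert.hyps by simp
  have "(\<Sum>n\<in>insert a N. infsum (F n) A) = infsum (F a) A + (\<Sum>n\<in>N. infsum (F n) A)"
    using insert.hyps by simp
  also have "\<dots> = (\<Sum>\<^sub>\<infinity>j\<in>A. F a j + (\<Sum>n\<in>N. F n j))"
    using infsum_add[OF ia IH(1)] IH(2) by simp
  finally show ?case unfolding e using summable_on_add[OF ia IH(1)] by blast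
qed

lemma jbr_pos: "jbr k > 0" and jbr_ge1: "jbr k \<ge> 1"
  by (auto simp: jbr_def)

lemma pser: assumes "p > 1" shows "(\<lambda>j::int. jbr j powr (-p)) summable_on UNIV"
proof -
  have "summable (\<lambda>n::nat. real n powr (-p))" using assms summable_real_powr_iff by simp
  then have "summable (\<lambda>n::nat. real (n+1) powr (-p))" by (subst summable_iff_shift) 
  then have nat: "(\<lambda>n::nat. real (n+1) powr (-p)) summable_on UNIV"
    by (rule summable_nonneg_imp_summable_on) simp
  have e1: "(\<lambda>j::int. jbr j powr (-p)) \<circ> int = (\<lambda>n::nat. real (n+1) powr (-p))"
    by (auto simp: jbr_def add.commute)
  have P: "(\<lambda>j::int. jbr j powr (-p)) summable_on (int ` UNIV)"
    using nat by (subst summable_on_reindex) (auto simp: e1)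
  have e2: "(\<lambda>j::int. jbr j powr (-p)) \<circ> (\<lambda>n::nat. - int n - 1) = (\<lambda>n::nat. real (n+2) powr (-p))"
    by (auto simp: jbr_def add.commute)
  have nat2: "(\<lambda>n::nat. real (n+2) powr (-p)) summable_on UNIV"
  proof (rule summable_on_comparison_test[OF nat])
    fix n :: nat show "real (n+2) powr (-p) \<le> real (n+1) powr (-p)"
      using assms by (intro powr_mono2') auto
  qed simp
  have inj: "inj (\<lambda>n::nat. - int n - 1)" by (auto simp: inj_on_def)
  have N: "(\<lambda>j::int. jbr j powr (-p)) summable_on ((\<lambda>n::nat. - int n - 1) ` UNIV)"
    using nat2 by (subst summable_on_reindex[OF inj]) (auto simp: e2)
  have U: "UNIV = int ` UNIV \<union> (\<lambda>n::nat. - int n - 1) ` UNIV"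
  proof -
    have "x \<in> int ` UNIV \<union> (\<lambda>n::nat. - int n - 1) ` UNIV" for x :: int
    proof (cases "x \<ge> 0")
      case True then show ?thesis by (intro UnI1 image_eqI[where x="nat x"]) auto
    next
      case False then show ?thesis by (intro UnI2 image_eqI[where x="nat (-x-1)"]) auto
    qed
    then show ?thesis by blast
  qed
  have D: "int ` UNIV \<inter> (\<lambda>n::nat. - int n - 1) ` UNIV = {}" by auto
  show ?thesis using summable_on_Un_disjoint[OF P N D] by (simp only: U[symmetric])
qed

lemma kern:
  fixes n j :: int and a M Av Uv :: real
  assumes a0: "0 \<le> a" and aM: "a \<le> M" and A0: "Av \<ge> 0" and U0: "Uv \<ge> 0"
  shows "Av * Uv * jbr (n-j) powr a * jbr j powr (-M) \<le> 2 powr a * (jbr n powr a * (Av*Uv*jbr j powr (-M))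
     + (if \<bar>n\<bar> < \<bar>j\<bar> then Av*Uv*jbr j powr (a-M) else 0))"
proof (cases "\<bar>n\<bar> < \<bar>j\<bar>")
  case True
  have "jbr (n-j) \<le> 2 * jbr j" using True by (simp add: jbr_def)
  then have "jbr (n-j) powr a \<le> (2 * jbr j) powr a"
    using a0 by (intro powr_mono2) (auto simp: jbr_def)
  also have "\<dots> = 2 powr a * jbr j powr a" using jbr_pos by (simp add: powr_mult less_imp_le)
  finally have h: "jbr (n-j) powr a * jbr j powr (-M) \<le> 2 powr a * jbr j powr a * jbr j powr (-M)"
    by (simp add: mult_right_mono)
  have e: "jbr j powr a * jbr j powr (-M) = jbr j powr (a-M)"
    by (simp add: powr_add[symmetric])
  have "Av * Uv * jbr (n-j) powr a * jbr j powr (-M) \<le> Av * Uv * (2 powr a * jbr j powr (a-M))"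
    using mult_left_mono[OF h, of "Av*Uv"] A0 U0 e by (simp add: mult.assoc)
  moreover have "0 \<le> 2 powr a * (jbr n powr a * (Av*Uv*jbr j powr (-M)))" using A0 U0 by simp
  ultimately show ?thesis using True by (simp add: algebra_simps)
next
  case False
  have "jbr (n-j) \<le> 2 * jbr n" using False by (simp add: jbr_def)
  then have "jbr (n-j) powr a \<le> (2 * jbr n) powr a"
    using a0 by (intro powr_mono2) (auto simp: jbr_def)
  also have "\<dots> = 2 powr a * jbr n powr a" using jbr_pos by (simp add: powr_mult less_imp_le)
  finally have h: "jbr (n-j) powr a \<le> 2 powr a * jbr n powr a" .
  have "Av * Uv * jbr (n-j) powr a * jbr j powr (-M) = (Av * Uv * jbr j powr (-M)) * jbr (n-j) powr a"
    by simp
  also have "\<dots> \<le> (Av * Uv * jbr j powr (-M)) * (2 powr a * jbr n powr a)"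
    using A0 U0 h by (intro mult_left_mono) auto
  finally show ?thesis using False by (simp add: algebra_simps)
qed

lemma sq_powr: fixes x b :: real shows "(x powr b)\<^sup>2 = x powr (2*b)"
proof -
  have "x powr (2*b) = x powr (b+b)" by (simp only: mult_2)
  also have "\<dots> = x powr b * x powr b" by (rule powr_add)
  finally show ?thesis by (simp only: power2_eq_square)
qed

lemma jbr_powr_le1: "e \<le> 0 \<Longrightarrow> jbr k powr e \<le> 1"
  using powr_mono[of e 0 "jbr k"] jbr_ge1[of k] jbr_pos[of k] by simp

lemma jbr_powr_pos: "jbr k powr e > 0"
  using jbr_pos[of k] by simp

lemma bij_shift: "bij_betw (\<lambda>j::int. n - j) UNIV UNIV"
  by (rule bij_betwI[where g="\<lambda>j. n - j"]) auto

lemma shift_summable: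
  assumes "(\<lambda>k::int. f k) summable_on UNIV"
  shows "(\<lambda>j. f (n - j)) summable_on UNIV" "(\<Sum>\<^sub>\<infinity>j. f (n - j)) = (\<Sum>\<^sub>\<infinity>k. f k)"
proof -
  have "(\<lambda>x. f (n - x)) summable_on UNIV \<longleftrightarrow> f summable_on UNIV"
    by (rule summable_on_reindex_bij_betw[OF bij_shift])
  then show "(\<lambda>j. f (n - j)) summable_on UNIV" using assms by simp
  show "(\<Sum>\<^sub>\<infinity>j. f (n - j)) = (\<Sum>\<^sub>\<infinity>k. f k)"
    by (rule infsum_reindex_bij_betw[OF bij_shift])
qed

lemma single_le_infsum:
  fixes f :: "'a \<Rightarrow> real"
  assumes "f summable_on UNIV" "\<And>x. f x \<ge> 0"
  shows "f k \<le> (\<Sum>\<^sub>\<infinity>x. f x)"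
  using finite_sum_le_infsum[OF assms(1), of "{k}"] assms(2) by (simp del: infsum_finite)

lemma finite_shift_le:
  fixes f :: "int \<Rightarrow> real"
  assumes "f summable_on UNIV" "\<And>x. f x \<ge> 0" "finite N"
  shows "(\<Sum>n\<in>N. f (n - j)) \<le> (\<Sum>\<^sub>\<infinity>x. f x)"
proof -
  have inj: "inj_on (\<lambda>n. n - j) N" by (auto simp: inj_on_def)
  have "(\<Sum>n\<in>N. f (n - j)) = sum f ((\<lambda>n. n - j) ` N)"
    using sum.reindex[OF inj, of f] by (simp add: o_def)
  also have "\<dots> \<le> (\<Sum>\<^sub>\<infinity>x. f x)"
    by (rule finite_sum_le_infsum[OF assms(1)]) (use assms in auto)
  finally show ?thesis .
qed


lemma mult_est:
  fixes V u :: "int \<Rightarrow> complex" and a :: real and m :: nat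
  assumes m1: "m \<ge> 1" and a0: "0 \<le> a" and am: "a \<le> real m"
    and hV: "(\<lambda>k. jbr k powr (2 * (- a)) * (cmod (V k))\<^sup>2) summable_on UNIV"
    and hu: "(\<lambda>j. jbr j powr (2 * real m) * (cmod (u j))\<^sup>2) summable_on UNIV"
  shows "(\<lambda>n. jbr n powr (2 * (- a)) * (cmod (fmult V u n))\<^sup>2) summable_on UNIV"
proof -
  define M where "M = real m"
  have M1: "M \<ge> 1" using m1 by (simp add: M_def)
  have aM: "a \<le> M" using am by (simp add: M_def)
  define A where "A k = jbr k powr (-a) * cmod (V k)" for k
  define U where "U j = jbr j powr M * cmod (u j)" for j
  have A0: "\<And>k. A k \<ge> 0" and U0: "\<And>k. U k \<ge> 0" by (simp_all add: A_def U_def)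
  have A2: "\<And>k. (A k)\<^sup>2 = jbr k powr (2 * (- a)) * (cmod (V k))\<^sup>2"
    by (simp add: A_def power_mult_distrib sq_powr)
  have U2: "\<And>k. (U k)\<^sup>2 = jbr k powr (2 * real m) * (cmod (u k))\<^sup>2"
    by (simp add: U_def M_def power_mult_distrib sq_powr)
  have sA: "(\<lambda>k. (A k)\<^sup>2) summable_on UNIV" using hV by (simp add: A2)
  have sU: "(\<lambda>k. (U k)\<^sup>2) summable_on UNIV" using hu by (simp add: U2)
  define SA where "SA = (\<Sum>\<^sub>\<infinity>k. (A k)\<^sup>2)"
  define SU where "SU = (\<Sum>\<^sub>\<infinity>k. (U k)\<^sup>2)"
  have SA0: "SA \<ge> 0" and SU0: "SU \<ge> 0" by (simp_all add: SA_def SU_def infsum_nonneg)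
  have Ale: "\<And>k. (A k)\<^sup>2 \<le> SA" unfolding SA_def by (rule single_le_infsum[OF sA]) simp
  have cV: "\<And>k. cmod (V k) = A k * jbr k powr a"
  proof -
    fix k
    have "jbr k powr (-a) * jbr k powr a = 1" using jbr_pos[of k] by (simp add: powr_add[symmetric])
    then show "cmod (V k) = A k * jbr k powr a" unfolding A_def by (metis mult.commute mult.left_commute mult_1)
  qed
  have cu: "\<And>k. cmod (u k) = U k * jbr k powr (-M)"
  proof -
    fix k
    have "jbr k powr M * jbr k powr (-M) = 1" using jbr_pos[of k] by (simp add: powr_add[symmetric])
    then show "cmod (u k) = U k * jbr k powr (-M)" unfolding U_def by (metis mult.commute mult.left_commute mult_1)
  qed
  have sAs: "\<And>n. (\<lambda>j. (A (n - j))\<^sup>2) summable_on UNIV" using shift_summable(1)[OF sA] by blast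
  have SAs: "\<And>n. (\<Sum>\<^sub>\<infinity>j. (A (n - j))\<^sup>2) = SA" using shift_summable(2)[OF sA] SA_def by blast
  have sAU: "\<And>n. (\<lambda>j. A (n - j) * U j) summable_on UNIV"
    using cs_infsum(1)[OF A0 U0 sAs sU] by blast
  have AUle: "\<And>n. (\<Sum>\<^sub>\<infinity>j. A (n - j) * U j) \<le> sqrt (SA * SU)"
  proof -
    fix n
    have "(\<Sum>\<^sub>\<infinity>j. A (n - j) * U j)\<^sup>2 \<le> SA * SU"
      using cs_infsum(2)[OF A0 U0 sAs sU, of n] SAs[of n] by (simp add: SU_def)
    then show "(\<Sum>\<^sub>\<infinity>j. A (n - j) * U j) \<le> sqrt (SA * SU)" by (rule real_le_rsqrt)
  qed
  define P where "P n = (\<Sum>\<^sub>\<infinity>j. A (n - j) * U j * jbr j powr (-M))" for n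
  define Yf where "Yf n j = (if \<bar>n\<bar> < \<bar>j\<bar> then U j * jbr j powr (a - M) else 0)" for n j
  define Q where "Q n = (\<Sum>\<^sub>\<infinity>j. A (n - j) * Yf n j)" for n
  have Yf0: "\<And>n j. Yf n j \<ge> 0" by (simp add: Yf_def U0)
  have Yfle: "\<And>n j. Yf n j \<le> U j"
  proof -
    fix n j
    have "jbr j powr (a - M) \<le> 1" using aM by (intro jbr_powr_le1) simp
    then show "Yf n j \<le> U j" unfolding Yf_def using U0[of j]
      by (auto intro: mult_left_le)
  qed
  have sP: "\<And>n. (\<lambda>j. A (n - j) * U j * jbr j powr (-M)) summable_on UNIV"
  proof -
    fix n show "(\<lambda>j. A (n - j) * U j * jbr j powr (-M)) summable_on UNIV"
    proof (rule summable_on_comparison_test[OF sAU[of n]])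
      fix j
      have "jbr j powr (-M) \<le> 1" using M1 by (intro jbr_powr_le1) simp
      then show "A (n - j) * U j * jbr j powr (-M) \<le> A (n - j) * U j"
        using A0 U0 by (intro mult_left_le) auto
      show "0 \<le> A (n - j) * U j * jbr j powr (-M)" using A0 U0 by simp
    qed
  qed
  have sQ: "\<And>n. (\<lambda>j. A (n - j) * Yf n j) summable_on UNIV"
  proof -
    fix n show "(\<lambda>j. A (n - j) * Yf n j) summable_on UNIV"
    proof (rule summable_on_comparison_test[OF sAU[of n]])
      fix j
      show "A (n - j) * Yf n j \<le> A (n - j) * U j" using A0 Yfle by (intro mult_left_mono) auto
      show "0 \<le> A (n - j) * Yf n j" using A0 Yf0 by simp
    qed
  qed
  define K where "K n j = 2 powr a * (jbr n powr a * (A (n - j) * U j * jbr j powr (-M)) + A (n - j) * Yf n j)" for n j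
  have Kb: "\<And>n j. cmod (V (n - j) * u j) \<le> K n j"
  proof -
    fix n j
    have "cmod (V (n - j) * u j) = A (n - j) * U j * jbr (n - j) powr a * jbr j powr (-M)"
      by (simp add: norm_mult cV cu)
    also have "\<dots> \<le> K n j"
      using kern[OF a0 aM A0[of "n-j"] U0[of j], of n j]
      by (cases "\<bar>n\<bar> < \<bar>j\<bar>") (simp_all add: K_def Yf_def mult.assoc)
    finally show "cmod (V (n - j) * u j) \<le> K n j" .
  qed
  have sK: "\<And>n. K n summable_on UNIV"
    unfolding K_def
    by (intro summable_on_cmult_right summable_on_add sP sQ)
  have iK: "\<And>n. (\<Sum>\<^sub>\<infinity>j. K n j) = 2 powr a * (jbr n powr a * P n + Q n)"
  proof -
    fix n
    have s1: "(\<lambda>j. jbr n powr a * (A (n - j) * U j * jbr j powr (-M))) summable_on UNIV"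
      by (rule summable_on_cmult_right[OF sP])
    have "(\<Sum>\<^sub>\<infinity>j. K n j) = 2 powr a * (\<Sum>\<^sub>\<infinity>j. jbr n powr a * (A (n - j) * U j * jbr j powr (-M)) + A (n - j) * Yf n j)"
      unfolding K_def by (rule infsum_cmult_right) (rule summable_on_add[OF s1 sQ])
    also have "\<dots> = 2 powr a * ((\<Sum>\<^sub>\<infinity>j. jbr n powr a * (A (n - j) * U j * jbr j powr (-M))) + Q n)"
      unfolding Q_def by (simp only: infsum_add[OF s1 sQ])
    also have "(\<Sum>\<^sub>\<infinity>j. jbr n powr a * (A (n - j) * U j * jbr j powr (-M))) = jbr n powr a * P n"
      unfolding P_def by (rule infsum_cmult_right) (rule sP)
    finally show "(\<Sum>\<^sub>\<infinity>j. K n j) = 2 powr a * (jbr n powr a * P n + Q n)" .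
  qed
  have hb: "\<And>n. cmod (fmult V u n) \<le> 2 powr a * (jbr n powr a * P n + Q n)"
  proof -
    fix n
    have abs: "(\<lambda>j. norm (V (n - j) * u j)) summable_on UNIV"
    proof (rule summable_on_comparison_test[OF sK[of n]])
      fix j show "norm (V (n - j) * u j) \<le> K n j" by (rule Kb)
    qed simp
    have "cmod (fmult V u n) \<le> (\<Sum>\<^sub>\<infinity>j. norm (V (n - j) * u j))"
      unfolding fmult_def by (rule norm_infsum_bound[OF abs])
    also have "\<dots> \<le> (\<Sum>\<^sub>\<infinity>j. K n j)" by (rule infsum_mono[OF abs sK]) (rule Kb)
    finally show "cmod (fmult V u n) \<le> 2 powr a * (jbr n powr a * P n + Q n)" by (simp add: iK)
  qed
  have P0: "\<And>n. P n \<ge> 0" unfolding P_def using A0 U0 by (simp add: infsum_nonneg)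
  have Q0: "\<And>n. Q n \<ge> 0" unfolding Q_def using A0 Yf0 by (simp add: infsum_nonneg)
  define w where "w n = jbr n powr (2 * (- a))" for n
  have w0: "\<And>n. w n \<ge> 0" by (simp add: w_def)
  have w1: "\<And>n. w n \<le> 1" unfolding w_def using a0 by (intro jbr_powr_le1) simp
  have wx: "\<And>n. w n * (jbr n powr a * P n)\<^sup>2 = (P n)\<^sup>2"
  proof -
    fix n
    have "w n * (jbr n powr a)\<^sup>2 = 1" unfolding w_def sq_powr using jbr_pos[of n]
      by (simp add: powr_add[symmetric])
    then show "w n * (jbr n powr a * P n)\<^sup>2 = (P n)\<^sup>2"
      by (simp add: power_mult_distrib mult.assoc[symmetric])
  qed
  define c where "c = 2 powr a"
  have Phi: "\<And>n. w n * (cmod (fmult V u n))\<^sup>2 \<le> 2 * c\<^sup>2 * ((P n)\<^sup>2 + w n * (Q n)\<^sup>2)"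
  proof -
    fix n
    define x where "x = jbr n powr a * P n"
    have x0: "x \<ge> 0" using P0 by (simp add: x_def)
    have "(cmod (fmult V u n))\<^sup>2 \<le> (c * (x + Q n))\<^sup>2"
      using hb[of n] by (intro power_mono) (simp_all add: c_def x_def)
    also have "\<dots> = c\<^sup>2 * (x + Q n)\<^sup>2" by (simp add: power_mult_distrib)
    also have "\<dots> \<le> c\<^sup>2 * (2 * (x\<^sup>2 + (Q n)\<^sup>2))"
    proof (rule mult_left_mono)
      show "(x + Q n)\<^sup>2 \<le> 2 * (x\<^sup>2 + (Q n)\<^sup>2)"
        using sum_squares_bound[of x "Q n"] by (simp add: power2_sum)
    qed simp
    finally have "w n * (cmod (fmult V u n))\<^sup>2 \<le> w n * (c\<^sup>2 * (2 * (x\<^sup>2 + (Q n)\<^sup>2)))"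
      by (rule mult_left_mono) (rule w0)
    also have "\<dots> = 2 * c\<^sup>2 * (w n * x\<^sup>2 + w n * (Q n)\<^sup>2)" by (simp add: algebra_simps)
    also have "w n * x\<^sup>2 = (P n)\<^sup>2" unfolding x_def by (rule wx)
    finally show "w n * (cmod (fmult V u n))\<^sup>2 \<le> 2 * c\<^sup>2 * ((P n)\<^sup>2 + w n * (Q n)\<^sup>2)" .
  qed
  define R where "R n = (\<Sum>\<^sub>\<infinity>j. (A (n - j) * U j)\<^sup>2)" for n
  define Z where "Z = (\<Sum>\<^sub>\<infinity>j. (jbr j powr (-M))\<^sup>2)"
  have sR1: "\<And>n. (\<lambda>j. (A (n - j) * U j)\<^sup>2) summable_on UNIV"
  proof -
    fix n show "(\<lambda>j. (A (n - j) * U j)\<^sup>2) summable_on UNIV"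
    proof (rule summable_on_comparison_test[OF summable_on_cmult_right[OF sU, of SA]])
      fix j show "(A (n - j) * U j)\<^sup>2 \<le> SA * (U j)\<^sup>2"
        unfolding power_mult_distrib by (rule mult_right_mono[OF Ale]) simp
    qed simp
  qed
  have sZ: "(\<lambda>j. (jbr j powr (-M))\<^sup>2) summable_on UNIV"
    using pser[of "2*M"] M1 by (simp add: sq_powr)
  have PR: "\<And>n. (P n)\<^sup>2 \<le> R n * Z"
  proof -
    fix n
    have "(\<lambda>j. A (n - j) * U j) = (\<lambda>j. A (n - j) * U j)" ..
    show "(P n)\<^sup>2 \<le> R n * Z"
      using cs_infsum(2)[of "\<lambda>j. A (n - j) * U j" "\<lambda>j. jbr j powr (-M)" UNIV] A0 U0 sR1[of n] sZ
      unfolding P_def R_def Z_def by simp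
  qed
  have sR: "R summable_on UNIV"
  proof (rule nonneg_bdd_above_summable_on)
    show "\<And>x. x \<in> UNIV \<Longrightarrow> 0 \<le> R x" unfolding R_def by (simp add: infsum_nonneg)
    show "bdd_above (sum R ` {F. F \<subseteq> UNIV \<and> finite F})"
    proof (rule bdd_aboveI2)
      fix N assume "N \<in> {F. F \<subseteq> (UNIV::int set) \<and> finite F}"
      then have fN: "finite N" by simp
      have sw: "(\<lambda>j. \<Sum>n\<in>N. (A (n - j) * U j)\<^sup>2) summable_on UNIV \<and>
          (\<Sum>n\<in>N. R n) = (\<Sum>\<^sub>\<infinity>j. \<Sum>n\<in>N. (A (n - j) * U j)\<^sup>2)"
        unfolding R_def by (rule sum_infsum_swap[OF fN sR1])
      have "(\<Sum>n\<in>N. R n) \<le> (\<Sum>\<^sub>\<infinity>j. SA * (U j)\<^sup>2)"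
        unfolding sw[THEN conjunct2]
      proof (rule infsum_mono[OF sw[THEN conjunct1] summable_on_cmult_right[OF sU]])
        fix j
        have "(\<Sum>n\<in>N. (A (n - j) * U j)\<^sup>2) = (\<Sum>n\<in>N. (A (n - j))\<^sup>2) * (U j)\<^sup>2"
          by (simp add: power_mult_distrib sum_distrib_right)
        also have "\<dots> \<le> SA * (U j)\<^sup>2"
          unfolding SA_def by (rule mult_right_mono[OF finite_shift_le[OF sA _ fN]]) simp_all
        finally show "(\<Sum>n\<in>N. (A (n - j) * U j)\<^sup>2) \<le> SA * (U j)\<^sup>2" .
      qed
      also have "\<dots> = SA * SU" unfolding SU_def by (rule infsum_cmult_right) (rule sU)
      finally show "sum R N \<le> SA * SU" .
    qed
  qed
  obtain G where sG: "G summable_on UNIV" and G0: "\<And>n. G n \<ge> 0" and GQ: "\<And>n. w n * (Q n)\<^sup>2 \<le> G n"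
  proof (cases "a > 1/2")
    case True
    have QS: "\<And>n. (Q n)\<^sup>2 \<le> SA * SU"
    proof -
      fix n
      have "Q n \<le> (\<Sum>\<^sub>\<infinity>j. A (n - j) * U j)"
        unfolding Q_def by (rule infsum_mono[OF sQ sAU]) (use A0 Yfle in \<open>auto intro: mult_left_mono\<close>)
      also have "\<dots> \<le> sqrt (SA * SU)" by (rule AUle)
      finally have "(Q n)\<^sup>2 \<le> (sqrt (SA * SU))\<^sup>2" using Q0[of n] by (intro power_mono) auto
      then show "(Q n)\<^sup>2 \<le> SA * SU" using SA0 SU0 by simp
    qed
    show ?thesis
    proof (rule that[of "\<lambda>n. w n * (SA * SU)"])
      show "(\<lambda>n. w n * (SA * SU)) summable_on UNIV"
        unfolding w_def using summable_on_cmult_left[OF pser[of "2*a"], of "SA*SU"] True by simp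
      show "\<And>n. 0 \<le> w n * (SA * SU)" using w0 SA0 SU0 by simp
      show "\<And>n. w n * (Q n)\<^sup>2 \<le> w n * (SA * SU)" using w0 QS by (intro mult_left_mono) auto
    qed
  next
    case False
    then have aM2: "1 + 2*a - 2*M \<le> 0" using M1 by simp
    define T where "T n = (\<Sum>\<^sub>\<infinity>j. (Yf n j)\<^sup>2)" for n
    have sY: "\<And>n. (\<lambda>j. (Yf n j)\<^sup>2) summable_on UNIV"
    proof -
      fix n show "(\<lambda>j. (Yf n j)\<^sup>2) summable_on UNIV"
        by (rule summable_on_comparison_test[OF sU]) (use Yf0 Yfle in \<open>auto intro: power_mono\<close>)
    qed
    have QT: "\<And>n. w n * (Q n)\<^sup>2 \<le> SA * T n"
    proof -
      fix n
      have "(Q n)\<^sup>2 \<le> SA * T n"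
        using cs_infsum(2)[of "\<lambda>j. A (n - j)" "Yf n" UNIV] A0 Yf0 sAs[of n] sY[of n] SAs[of n]
        unfolding Q_def T_def by simp
      moreover have "w n * (Q n)\<^sup>2 \<le> (Q n)\<^sup>2" using w1[of n] w0[of n] by (intro mult_left_le_one_le) auto
      ultimately show "w n * (Q n)\<^sup>2 \<le> SA * T n" by linarith
    qed
    have sT: "T summable_on UNIV"
    proof (rule nonneg_bdd_above_summable_on)
      show "\<And>x. x \<in> UNIV \<Longrightarrow> 0 \<le> T x" unfolding T_def by (simp add: infsum_nonneg)
      show "bdd_above (sum T ` {F. F \<subseteq> UNIV \<and> finite F})"
      proof (rule bdd_aboveI2)
        fix N assume "N \<in> {F. F \<subseteq> (UNIV::int set) \<and> finite F}"
        then have fN: "finite N" by simp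
        have sw: "(\<lambda>j. \<Sum>n\<in>N. (Yf n j)\<^sup>2) summable_on UNIV \<and>
            (\<Sum>n\<in>N. T n) = (\<Sum>\<^sub>\<infinity>j. \<Sum>n\<in>N. (Yf n j)\<^sup>2)"
          unfolding T_def by (rule sum_infsum_swap[OF fN sY])
        have "(\<Sum>n\<in>N. T n) \<le> (\<Sum>\<^sub>\<infinity>j. 2 * (U j)\<^sup>2)"
          unfolding sw[THEN conjunct2]
        proof (rule infsum_mono[OF sw[THEN conjunct1] summable_on_cmult_right[OF sU]])
          fix j :: int
          define I where "I = {-\<bar>j\<bar>..\<bar>j\<bar>}"
          define cc where "cc = (U j * jbr j powr (a - M))\<^sup>2"
          have fI: "finite I" by (simp add: I_def)
          have "(\<Sum>n\<in>N. (Yf n j)\<^sup>2) \<le> (\<Sum>n\<in>N \<union> I. (Yf n j)\<^sup>2)"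
            by (rule sum_mono2) (use fN fI in auto)
          also have "\<dots> = (\<Sum>n\<in>I. (Yf n j)\<^sup>2)"
            by (rule sum.mono_neutral_right) (use fN fI in \<open>auto simp: I_def Yf_def\<close>)
          also have "\<dots> \<le> (\<Sum>n\<in>I. cc)"
            by (rule sum_mono) (auto simp: Yf_def cc_def)
          also have "\<dots> = real (nat (2 * \<bar>j\<bar> + 1)) * cc" by (simp add: I_def)
          also have "\<dots> \<le> 2 * jbr j * cc"
            by (rule mult_right_mono) (auto simp: jbr_def cc_def)
          also have "\<dots> = 2 * (U j)\<^sup>2 * jbr j powr (1 + 2*a - 2*M)"
          proof -
            have "jbr j * (jbr j powr (a - M))\<^sup>2 = jbr j powr (1 + 2*a - 2*M)"
            proof -
              have "jbr j powr (1 + 2*a - 2*M) = jbr j powr (1 + 2*(a - M))" by (simp add: algebra_simps)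
              also have "\<dots> = jbr j powr 1 * jbr j powr (2*(a - M))" by (rule powr_add)
              also have "jbr j powr 1 = jbr j" using jbr_pos[of j] by simp
              finally show ?thesis unfolding sq_powr by simp
            qed
            then show ?thesis unfolding cc_def power_mult_distrib
              by (metis (no_types, lifting) mult.assoc mult.left_commute)
          qed
          also have "\<dots> \<le> 2 * (U j)\<^sup>2 * 1"
            by (rule mult_left_mono[OF jbr_powr_le1[OF aM2]]) simp
          finally show "(\<Sum>n\<in>N. (Yf n j)\<^sup>2) \<le> 2 * (U j)\<^sup>2" by simp
        qed
        also have "\<dots> = 2 * SU" unfolding SU_def by (rule infsum_cmult_right) (rule sU)
        finally show "sum T N \<le> 2 * SU" .
      qed
    qed
    show ?thesis
    proof (rule that[of "\<lambda>n. SA * T n"])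
      show "(\<lambda>n. SA * T n) summable_on UNIV" by (rule summable_on_cmult_right[OF sT])
      show "\<And>n. 0 \<le> SA * T n" using SA0 unfolding T_def by (simp add: infsum_nonneg)
      show "\<And>n. w n * (Q n)\<^sup>2 \<le> SA * T n" by (rule QT)
    qed
  qed
  have sB: "(\<lambda>n. 2 * c\<^sup>2 * (Z * R n + G n)) summable_on UNIV"
    by (intro summable_on_cmult_right summable_on_add sR sG)
  show ?thesis
  proof (rule summable_on_comparison_test[OF sB])
    fix n
    have "w n * (cmod (fmult V u n))\<^sup>2 \<le> 2 * c\<^sup>2 * ((P n)\<^sup>2 + w n * (Q n)\<^sup>2)" by (rule Phi)
    also have "\<dots> \<le> 2 * c\<^sup>2 * (Z * R n + G n)"
    proof (rule mult_left_mono)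
      show "(P n)\<^sup>2 + w n * (Q n)\<^sup>2 \<le> Z * R n + G n"
        using PR[of n] GQ[of n] by (simp add: mult.commute)
    qed simp
    finally show "jbr n powr (2 * - a) * (cmod (fmult V u n))\<^sup>2 \<le> 2 * c\<^sup>2 * (Z * R n + G n)"
      by (simp add: w_def)
    show "0 \<le> jbr n powr (2 * - a) * (cmod (fmult V u n))\<^sup>2" by simp
  qed
qed


lemma ptbound:
  fixes n :: int and m :: nat and a :: real and u x h :: complex
  assumes n0: "n \<noteq> 0" and a0: "0 \<le> a"
    and ex: "complex_of_real ((real_of_int n * pi) ^ (2 * m)) * x = g - h"
  shows "jbr n powr (2 * real m * 2 - 2 * a) * (cmod x)\<^sup>2
     \<le> 2 * 16 ^ m * ((cmod g)\<^sup>2 + jbr n powr (2 * (- a)) * (cmod h)\<^sup>2)"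
proof -
  define w where "w = jbr n powr (2 * (- a))"
  have w0: "0 \<le> w" and w1: "w \<le> 1" unfolding w_def using a0 by (auto intro: jbr_powr_le1)
  have jp: "jbr n > 0" by (rule jbr_pos)
  have e1: "jbr n powr (2 * real m * 2 - 2 * a) = w * (jbr n ^ (2*m))\<^sup>2"
  proof -
    have "jbr n ^ (2*m) = jbr n powr (real (2*m))" using powr_realpow[OF jp, of "2*m"] by simp
    then have "(jbr n ^ (2*m))\<^sup>2 = jbr n powr (2 * real (2*m))" by (simp add: sq_powr)
    moreover have "jbr n powr (2 * real m * 2 - 2 * a) = jbr n powr (2 * (- a)) * jbr n powr (2 * real (2*m))"
      by (simp add: powr_add[symmetric] algebra_simps)
    ultimately show ?thesis by (simp add: w_def)
  qed
  have hn: "jbr n / 2 \<le> \<bar>real_of_int n * pi\<bar>"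
  proof -
    have "jbr n / 2 \<le> \<bar>real_of_int n\<bar>" using n0 by (simp add: jbr_def)
    also have "\<dots> \<le> \<bar>real_of_int n\<bar> * pi" using mult_left_mono[of 1 pi "\<bar>real_of_int n\<bar>"] pi_ge_two by simp
    finally show ?thesis by (simp add: abs_mult)
  qed
  have "jbr n ^ (2*m) = 4 ^ m * (jbr n / 2) ^ (2*m)"
    by (simp add: power_divide power_mult)
  also have "\<dots> \<le> 4 ^ m * \<bar>real_of_int n * pi\<bar> ^ (2*m)"
    using hn jp by (intro mult_left_mono power_mono) auto
  also have "\<bar>real_of_int n * pi\<bar> ^ (2*m) = (real_of_int n * pi) ^ (2*m)"
    by (simp add: power_even_abs)
  finally have jb: "jbr n ^ (2*m) \<le> 4 ^ m * (real_of_int n * pi) ^ (2*m)" .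
  have nn: "0 \<le> (real_of_int n * pi) ^ (2*m)" by (simp add: zero_le_even_power)
  have "jbr n ^ (2*m) * cmod x \<le> 4 ^ m * ((real_of_int n * pi) ^ (2*m) * cmod x)"
    using mult_right_mono[OF jb norm_ge_zero[of x]] by (simp add: mult.assoc)
  also have "(real_of_int n * pi) ^ (2*m) * cmod x = cmod (g - h)"
  proof -
    have "cmod (complex_of_real ((real_of_int n * pi) ^ (2 * m)) * x) = (real_of_int n * pi) ^ (2*m) * cmod x"
      by (simp only: norm_mult norm_of_real abs_of_nonneg[OF nn])
    then show ?thesis using ex by simp
  qed
  also have "cmod (g - h) \<le> cmod g + cmod h" by (rule norm_triangle_ineq4)
  finally have b1: "jbr n ^ (2*m) * cmod x \<le> 4 ^ m * (cmod g + cmod h)" by simp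
  have "jbr n powr (2 * real m * 2 - 2 * a) * (cmod x)\<^sup>2 = w * (jbr n ^ (2*m) * cmod x)\<^sup>2"
    unfolding e1 by (simp add: power_mult_distrib)
  also have "\<dots> \<le> w * (4 ^ m * (cmod g + cmod h))\<^sup>2"
    using b1 jp w0 by (intro mult_left_mono power_mono) auto
  also have "\<dots> = w * 16 ^ m * (cmod g + cmod h)\<^sup>2"
  proof -
    have f: "((4::real)^m)\<^sup>2 = 16^m" by (simp add: power2_eq_square power_mult_distrib[symmetric])
    show ?thesis by (simp add: power_mult_distrib f)
  qed
  also have "\<dots> \<le> w * 16 ^ m * (2 * ((cmod g)\<^sup>2 + (cmod h)\<^sup>2))"
    using sum_squares_bound[of "cmod g" "cmod h"] w0
    by (intro mult_left_mono) (auto simp: power2_sum)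
  also have "\<dots> = 2 * 16 ^ m * (w * (cmod g)\<^sup>2 + w * (cmod h)\<^sup>2)" by (simp add: algebra_simps)
  also have "\<dots> \<le> 2 * 16 ^ m * ((cmod g)\<^sup>2 + w * (cmod h)\<^sup>2)"
    using w1 w0 by (intro mult_left_mono add_right_mono mult_left_le_one_le) auto
  finally show ?thesis by (simp add: w_def)
qed

theorem theorem2:
  fixes m :: nat and \<alpha> :: real and V :: "int \<Rightarrow> complex" and pm :: bool
  assumes "m \<ge> 1"
    and "0 \<le> \<alpha>" and "\<alpha> \<le> 1"
    and "V \<in> Hsp True (- (real m * \<alpha>))"
  shows "DomS pm m V \<subseteq> Hsp pm (real m * (2 - \<alpha>))"
proof
  fix u assume uD: "u \<in> DomS pm m V"
  define a where "a = real m * \<alpha>"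
  have a0: "0 \<le> a" using assms by (simp add: a_def)
  have am: "a \<le> real m" using assms by (simp add: a_def mult_left_le)
  have uz: "\<And>n. n \<notin> freqs pm \<Longrightarrow> u n = 0" and us: "(\<lambda>n. jbr n powr (2 * real m) * (cmod (u n))\<^sup>2) summable_on freqs pm"
    using uD by (auto simp: DomS_def Hsp_def)
  define g where "g n = Dpow m u n + fmult V u n" for n
  have gs0: "(\<lambda>n. jbr n powr (2 * 0) * (cmod (g n))\<^sup>2) summable_on freqs pm"
    using uD by (simp add: DomS_def Hsp_def g_def)
  have gs: "(\<lambda>n. (cmod (g n))\<^sup>2) summable_on freqs pm"
    using gs0 jbr_pos by (simp add: less_imp_neq[symmetric])
  have Vz: "\<And>n. n \<notin> freqs True \<Longrightarrow> V n = 0" and Vs: "(\<lambda>n. jbr n powr (2 * (- a)) * (cmod (V n))\<^sup>2) summable_on freqs True"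
    using assms(4) by (auto simp: Hsp_def a_def)
  have VU: "(\<lambda>n. jbr n powr (2 * (- a)) * (cmod (V n))\<^sup>2) summable_on UNIV"
    using Vs by (subst summable_on_cong_neutral[where T="freqs True"]) (auto simp: Vz)
  have uU: "(\<lambda>n. jbr n powr (2 * real m) * (cmod (u n))\<^sup>2) summable_on UNIV"
    using us by (subst summable_on_cong_neutral[where T="freqs pm"]) (auto simp: uz)
  have PhU: "(\<lambda>n. jbr n powr (2 * (- a)) * (cmod (fmult V u n))\<^sup>2) summable_on UNIV"
    by (rule mult_est[OF assms(1) a0 am VU uU])
  have Ph: "(\<lambda>n. jbr n powr (2 * (- a)) * (cmod (fmult V u n))\<^sup>2) summable_on freqs pm"
    by (rule summable_on_subset_banach[OF PhU]) simp
  have sB: "(\<lambda>n. 2 * 16 ^ m * ((cmod (g n))\<^sup>2 + jbr n powr (2 * (- a)) * (cmod (fmult V u n))\<^sup>2)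
      + jbr n powr (2 * real m) * (cmod (u n))\<^sup>2) summable_on freqs pm"
    by (intro summable_on_add summable_on_cmult_right gs Ph us)
  have "(\<lambda>n. jbr n powr (2 * (real m * (2 - \<alpha>))) * (cmod (u n))\<^sup>2) summable_on freqs pm"
  proof (rule summable_on_comparison_test[OF sB])
    fix n
    have ex: "2 * (real m * (2 - \<alpha>)) = 2 * real m * 2 - 2 * a" by (simp add: a_def algebra_simps)
    show "jbr n powr (2 * (real m * (2 - \<alpha>))) * (cmod (u n))\<^sup>2 \<le> 2 * 16 ^ m * ((cmod (g n))\<^sup>2 + jbr n powr (2 * (- a)) * (cmod (fmult V u n))\<^sup>2)
      + jbr n powr (2 * real m) * (cmod (u n))\<^sup>2"
    proof (cases "n = 0")
      case True
      have "0 \<le> 2 * 16 ^ m * ((cmod (g n))\<^sup>2 + jbr n powr (2 * (- a)) * (cmod (fmult V u n))\<^sup>2)" by simp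
      then show ?thesis using True by (simp add: jbr_def)
    next
      case False
      have e: "complex_of_real ((real_of_int n * pi) ^ (2 * m)) * u n = g n - fmult V u n"
        by (simp add: g_def Dpow_def)
      have "jbr n powr (2 * (real m * (2 - \<alpha>))) * (cmod (u n))\<^sup>2 \<le> 2 * 16 ^ m * ((cmod (g n))\<^sup>2 + jbr n powr (2 * (- a)) * (cmod (fmult V u n))\<^sup>2)"
        unfolding ex by (rule ptbound[OF False a0 e])
      moreover have "0 \<le> jbr n powr (2 * real m) * (cmod (u n))\<^sup>2" by simp
      ultimately show ?thesis by linarith
    qed
    show "0 \<le> jbr n powr (2 * (real m * (2 - \<alpha>))) * (cmod (u n))\<^sup>2" by simp
  qed
  then show "u \<in> Hsp pm (real m * (2 - \<alpha>))" using uz by (simp add: Hsp_def)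
qed

end
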